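(* Consider the symmetric matrix model $f_{i,j}(\mathbf u)=\sum_{k=1}^H u_{k,i}u_{k,j}$, $i,j\in\{1,\ldots,p\}$, with parameters $\mathbf u=(u_{k,i})\in\mathbb R^{H\times p}$, trained by gradient flow $\frac{d\mathbf u}{dt}=-\frac1T\partial_{\mathbf u}L(\mathbf u)$ on $L(\mathbf u)=\frac12\sum_{i,j=1}^p(f_{i,j}(\mathbf u)-\delta_{i=j})^2$, and write $f_{i,j}(t)=f_{i,j}(\mathbf u(t))$, $\Theta_{i,j;i',j'}(t)=\Theta_{i,j;i',j'}(\mathbf u(t))$. Then the statement "$\Theta_{i,j;i',j'}(0)=\lim_{t\to\infty}\Theta_{i,j;i',j'}(t)$ for all $i,j,i',j'\in\{1,\ldots,p\}$" is equivalent to the statement "$f_{i,j}(0)=\lim_{t\to\infty}f_{i,j}(t)$ for all $i,j\in\{1,\ldots,p\}$".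
   Context: The neural tangent kernel (NTK) of the model is $\Theta_{i,j;i',j'}(\mathbf u)=\sum_{k=1}^H\sum_{l=1}^p\frac{\partial f_{i,j}(\mathbf u)}{\partial u_{k,l}}\frac{\partial f_{i',j'}(\mathbf u)}{\partial u_{k,l}}$. *)

theory Defs
  imports "HOL-Analysis.Analysis"
begin

text \<open>Parameters u = (u_{k,l}) in R^{H x p}, represented as real^'p^'h
  (index type 'h of size H, index type 'p of size p).\<close>

definition upd_param :: "real^'p^'h \<Rightarrow> 'h \<Rightarrow> 'p \<Rightarrow> real \<Rightarrow> real^'p^'h" where
  "upd_param u k l s = (\<chi> k'. \<chi> l'. if k' = k \<and> l' = l then s else u $ k' $ l')"

definition partial_u :: "(real^'p^'h \<Rightarrow> real) \<Rightarrow> real^'p^'h \<Rightarrow> 'h \<Rightarrow> 'p \<Rightarrow> real" where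
  "partial_u F u k l = deriv (\<lambda>s. F (upd_param u k l s)) (u $ k $ l)"

definition fmod :: "real^'p^'h \<Rightarrow> 'p \<Rightarrow> 'p \<Rightarrow> real" where
  "fmod u i j = (\<Sum>k\<in>UNIV. u $ k $ i * u $ k $ j)"

definition ntk :: "real^'p^'h \<Rightarrow> 'p \<Rightarrow> 'p \<Rightarrow> 'p \<Rightarrow> 'p \<Rightarrow> real" where
  "ntk u i j i' j' = (\<Sum>k\<in>UNIV. \<Sum>l\<in>UNIV.
      partial_u (\<lambda>v. fmod v i j) u k l * partial_u (\<lambda>v. fmod v i' j') u k l)"

definition loss :: "real^'p^'h \<Rightarrow> real" where
  "loss u = (1/2) * (\<Sum>i\<in>UNIV. \<Sum>j\<in>UNIV. (fmod u i j - (if i = j then 1 else 0))^2)"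

definition grad_loss :: "real^'p^'h \<Rightarrow> real^'p^'h" where
  "grad_loss u = (\<chi> k. \<chi> l. partial_u loss u k l)"

end

theory Submission
  imports Defs
begin

lemma partial_fmod:
  "partial_u (\<lambda>v. fmod v i j) u k l = (if l = i then u$k$j else 0) + (if l = j then u$k$i else 0)"
proof -
  let ?a = "\<lambda>s k'. (if k' = k \<and> i = l then s else u $ k' $ i)"
  let ?b = "\<lambda>s k'. (if k' = k \<and> j = l then s else u $ k' $ j)"
  have eq: "(\<lambda>s. fmod (upd_param u k l s) i j) = (\<lambda>s. \<Sum>k'\<in>UNIV. ?a s k' * ?b s k')"
    by (auto simp: fmod_def upd_param_def intro!: ext sum.cong)
  have d: "((\<lambda>s. \<Sum>k'\<in>UNIV. ?a s k' * ?b s k') has_field_derivative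
      (\<Sum>k'\<in>UNIV. (if k' = k \<and> i = l then 1 else 0) * ?b s k' + ?a s k' * (if k' = k \<and> j = l then 1 else 0))) (at s)" for s
    by (intro DERIV_sum DERIV_mult) (auto intro!: derivative_eq_intros)
  show ?thesis
    unfolding partial_u_def eq
    apply (subst DERIV_imp_deriv[OF d])
    apply (simp add: sum.distrib if_distrib[where f="\<lambda>x. x * _"] if_distrib[where f="\<lambda>x. _ * x"] cong: if_cong)
    done
qed

lemma ntk_formula:
  "ntk u i j i' j' = (if i = i' then fmod u j j' else 0) + (if i = j' then fmod u j i' else 0)
     + (if j = i' then fmod u i j' else 0) + (if j = j' then fmod u i i' else 0)"
  unfolding ntk_def partial_fmod
  by (simp add: algebra_simps sum.distrib if_distrib[where f="\<lambda>x. x * _"] if_distrib[where f="\<lambda>x. _ * x"] fmod_def sum.delta cong: if_cong)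

lemma fmod_from_ntk:
  "fmod u i j = ntk u i i i j / (if i = j then 4 else 2)"
  by (simp add: ntk_formula)

theorem proposition2:
  fixes u :: "real \<Rightarrow> real^'p^'h" and T :: real
  assumes "T > 0"
    and "\<forall>t\<ge>0. (u has_vector_derivative (- (1/T)) *\<^sub>R grad_loss (u t)) (at t within {0..})"
  shows "(\<forall>i j i' j'. ((\<lambda>t. ntk (u t) i j i' j') \<longlongrightarrow> ntk (u 0) i j i' j') at_top)
     \<longleftrightarrow> (\<forall>i j. ((\<lambda>t. fmod (u t) i j) \<longlongrightarrow> fmod (u 0) i j) at_top)"
proof
  assume H: "\<forall>i j i' j'. ((\<lambda>t. ntk (u t) i j i' j') \<longlongrightarrow> ntk (u 0) i j i' j') at_top"
  show "\<forall>i j. ((\<lambda>t. fmod (u t) i j) \<longlongrightarrow> fmod (u 0) i j) at_top"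
  proof (intro allI)
    fix i j
    have "((\<lambda>t. ntk (u t) i i i j / (if i = j then 4 else 2)) \<longlongrightarrow> ntk (u 0) i i i j / (if i = j then 4 else 2)) at_top"
      using H by (intro tendsto_divide) auto
    then show "((\<lambda>t. fmod (u t) i j) \<longlongrightarrow> fmod (u 0) i j) at_top"
      by (simp only: fmod_from_ntk[symmetric])
  qed
next
  assume H: "\<forall>i j. ((\<lambda>t. fmod (u t) i j) \<longlongrightarrow> fmod (u 0) i j) at_top"
  show "\<forall>i j i' j'. ((\<lambda>t. ntk (u t) i j i' j') \<longlongrightarrow> ntk (u 0) i j i' j') at_top"
    unfolding ntk_formula
    by (intro allI tendsto_add) (auto simp: H)
qed

end
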